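(* Assume the standing assumptions below, let $\gamma\in[0,\gamma_* )$ and let $U(\cdot;\gamma)$ be the finite wavefront with speed $c(\gamma)$. Let $\phi_{c(\gamma)}$ denote the flux $|(U^m)'|^{p-1}$ written as a function of the value $U\in(0,1)$ along the wavefront. Then, as $U\to1^-$, $$\phi_{c(\gamma)}(U)=C_{p,\gamma}(1-U)^{\mu_{p,\gamma}}(1+o(1)),$$ where $\mu_{p,\gamma}=p-1$ and $C_{p,\gamma}=(m|h'(1)|/c(\gamma))^{p-1}$ if $p>2$; $\mu_{p,\gamma}=1$ and $C_{p,\gamma}=\frac{-(c(\gamma)+\gamma m)+\sqrt{(c(\gamma)+\gamma m)^2+4m|h'(1)|}}{2}$ if $p=2$; and $\mu_{p,\gamma}=1$, $C_{p,\gamma}=|h'(1)|/\gamma$ if $p\in(1,2)$ and $\gamma>0$.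
   Context: Standing assumptions: $m>0$, $p>1$ with $m(p-1)>1$. $h\in C^1([0,\infty))$ satisfies $h(0)=0$, and for some $a\in[0,1)$: $h\le0$ on $[0,a]$, $h>0$ on $(a,1)$, $h<0$ on $(1,\infty)$, $h'(1)<0$; if $a>0$ also $\int_0^1h(u)u^{m-1}du>0$. For $\gamma\in[0,\gamma_* )$ ($\gamma_*>0$ small), $c(\gamma)>0$ denotes the unique speed for which the one-dimensional equation $u_t=(|(u^m)_r|^{p-2}(u^m)_r)_r+\gamma|(u^m)_r|^{p-2}(u^m)_r+h(u)$ has a finite wavefront, i.e. a travelling wave $U(r-ct)$ with $U$ continuous, nonincreasing, $U(-\infty)=1$, $U=0$ on some $[\xi_0,\infty)$ and $U>0$ on $(-\infty,\xi_0)$; it is unique up to translation. *)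

theory Defs
  imports "HOL-Analysis.Analysis"
begin

definition pflux :: "real \<Rightarrow> real \<Rightarrow> real" where
  "pflux p d = sgn d * \<bar>d\<bar> powr (p - 1)"

text \<open>U is a travelling-wave profile with speed c of
  u_t = (|(u^m)_r|^(p-2) (u^m)_r)_r + gamma |(u^m)_r|^(p-2) (u^m)_r + h(u),
  i.e. U(r - c t) solves it.  Weak (integrated) formulation: U^m is differentiable,
  the flux w = |(U^m)'|^(p-2) (U^m)' is locally integrable, and for all a \<le> b
  w(b) - w(a) + gamma \<integral>_a^b w + \<integral>_a^b h(U) + c (U(b) - U(a)) = 0,
  which is the integrated form of  -c U' = w' + gamma w + h(U).\<close>
definition tw_solution ::
  "real \<Rightarrow> real \<Rightarrow> real \<Rightarrow> (real \<Rightarrow> real) \<Rightarrow> real \<Rightarrow> (real \<Rightarrow> real) \<Rightarrow> bool" where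
  "tw_solution m p \<gamma> h c U \<longleftrightarrow>
     (\<forall>\<xi>. (\<lambda>s. U s powr m) differentiable (at \<xi>)) \<and>
     (\<forall>a b. a \<le> b \<longrightarrow>
        (let w = (\<lambda>s. pflux p (deriv (\<lambda>t. U t powr m) s)) in
          w integrable_on {a..b} \<and>
          w b - w a + \<gamma> * integral {a..b} w + integral {a..b} (\<lambda>s. h (U s))
            + c * (U b - U a) = 0))"

definition finite_wavefront ::
  "real \<Rightarrow> real \<Rightarrow> real \<Rightarrow> (real \<Rightarrow> real) \<Rightarrow> real \<Rightarrow> (real \<Rightarrow> real) \<Rightarrow> bool" where
  "finite_wavefront m p \<gamma> h c U \<longleftrightarrow>
     continuous_on UNIV U \<and>
     antimono U \<and>
     (U \<longlongrightarrow> 1) at_bot \<and>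
     (\<exists>\<xi>0. (\<forall>\<xi>\<ge>\<xi>0. U \<xi> = 0) \<and> (\<forall>\<xi><\<xi>0. U \<xi> > 0)) \<and>
     tw_solution m p \<gamma> h c U"

definition wave_flux :: "real \<Rightarrow> real \<Rightarrow> (real \<Rightarrow> real) \<Rightarrow> real \<Rightarrow> real" where
  "wave_flux m p U \<xi> = \<bar>deriv (\<lambda>t. U t powr m) \<xi>\<bar> powr (p - 1)"

definition flux_asymp ::
  "real \<Rightarrow> real \<Rightarrow> (real \<Rightarrow> real) \<Rightarrow> real \<Rightarrow> real \<Rightarrow> bool" where
  "flux_asymp m p U C \<mu> \<longleftrightarrow>
     (\<forall>\<epsilon>>0. \<exists>\<delta>>0. \<forall>\<xi>. 1 - \<delta> < U \<xi> \<and> U \<xi> < 1 \<longrightarrow>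
        \<bar>wave_flux m p U \<xi> / (C * (1 - U \<xi>) powr \<mu>) - 1\<bar> < \<epsilon>)"

end

theory Submission
  imports Defs
begin


lemma barrier_up:
  fixes \<Phi> :: "real \<Rightarrow> real"
  assumes "x < b" "continuous_on {x..b} \<Phi>" "\<Phi> b > 0"
    and der: "\<And>t. x < t \<Longrightarrow> t < b \<Longrightarrow> \<Phi> t > 0 \<Longrightarrow> \<exists>d. DERIV \<Phi> t :> d \<and> d < 0"
  shows "\<Phi> x \<ge> \<Phi> b"
proof -
  define S where "S = {x..b} \<inter> \<Phi> -` {..0}"
  have clS: "closed S" unfolding S_def
    by (rule continuous_closed_preimage[OF assms(2)]) auto
  show ?thesis
  proof (cases "S = {}")
    case True
    then have pos: "\<And>t. x \<le> t \<Longrightarrow> t \<le> b \<Longrightarrow> \<Phi> t > 0" unfolding S_def by force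
    have "\<Phi> x > \<Phi> b"
      by (rule DERIV_neg_imp_decreasing_open[OF assms(1) _ assms(2)]) (meson der pos less_imp_le)
    then show ?thesis by simp
  next
    case False
    have bdd: "bdd_above S" unfolding S_def by (auto intro: bdd_aboveI[of _ b])
    define t1 where "t1 = Sup S"
    have t1S: "t1 \<in> S" unfolding t1_def using closed_contains_Sup[OF False bdd clS] .
    then have t1: "x \<le> t1" "t1 \<le> b" "\<Phi> t1 \<le> 0" unfolding S_def by auto
    have "t1 \<noteq> b" using t1 assms(3) by auto
    then have t1b: "t1 < b" using t1 by simp
    have pos: "\<Phi> t > 0" if "t1 < t" "t \<le> b" for t
    proof (rule ccontr)
      assume "\<not> \<Phi> t > 0"
      then have "t \<in> S" using that t1 unfolding S_def by auto
      then have "t \<le> t1" unfolding t1_def using bdd by (simp add: cSup_upper)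
      then show False using that by simp
    qed
    have "\<Phi> t1 > \<Phi> b"
      by (rule DERIV_neg_imp_decreasing_open[OF t1b])
         (use der pos t1 t1b in \<open>auto intro: continuous_on_subset[OF assms(2)]\<close>)
    then show ?thesis using t1 assms(3) by simp
  qed
qed

lemma barrier_down:
  fixes \<Phi> :: "real \<Rightarrow> real"
  assumes "x < b" "continuous_on {x..b} \<Phi>" "\<Phi> b < 0"
    and der: "\<And>t. x < t \<Longrightarrow> t < b \<Longrightarrow> \<Phi> t < 0 \<Longrightarrow> \<exists>d. DERIV \<Phi> t :> d \<and> d > 0"
  shows "\<Phi> x \<le> \<Phi> b"
proof -
  have "(\<lambda>t. - \<Phi> t) x \<ge> (\<lambda>t. - \<Phi> t) b"
  proof (rule barrier_up[OF assms(1)])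
    show "continuous_on {x..b} (\<lambda>t. - \<Phi> t)" using assms(2) by (intro continuous_intros)
    show "- \<Phi> b > 0" using assms(3) by simp
    fix t assume "x < t" "t < b" "- \<Phi> t > 0"
    then obtain d where "DERIV \<Phi> t :> d" "d > 0" using der by force
    then show "\<exists>d. DERIV (\<lambda>t. - \<Phi> t) t :> d \<and> d < 0"
      by (intro exI[of _ "-d"]) (auto intro: derivative_intros)
  qed
  then show ?thesis by simp
qed



lemma Phi_cont:
  fixes U \<psi> :: "real \<Rightarrow> real"
  assumes "continuous_on UNIV U" "\<forall>t. U t \<le> 1" "continuous_on UNIV \<psi>" "\<mu> > 0"
  shows "continuous_on S (\<lambda>t. \<psi> t - K * (1 - U t) powr \<mu>)"
proof -
  have "continuous_on UNIV (\<lambda>t. \<psi> t - K * (1 - U t) powr \<mu>)"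
    using assms by (intro continuous_intros continuous_on_powr') auto
  then show ?thesis by (rule continuous_on_subset) auto
qed

lemma abstract_up:
  fixes U \<psi> :: "real \<Rightarrow> real" and K \<mu> \<delta>0 :: real
  assumes Ucont: "continuous_on UNIV U" and Uanti: "antimono U" and Ule: "\<forall>t. U t \<le> 1"
    and \<psi>cont: "continuous_on UNIV \<psi>" and \<psi>1: "\<forall>t. U t = 1 \<longrightarrow> \<psi> t = 0"
    and \<mu>: "\<mu> > 0" and K: "K \<ge> 0"
    and der: "\<forall>t. 1 - \<delta>0 < U t \<longrightarrow> U t < 1 \<longrightarrow> \<psi> t - K * (1 - U t) powr \<mu> > 0 \<longrightarrow>
               (\<exists>d. DERIV (\<lambda>t. \<psi> t - K * (1 - U t) powr \<mu>) t :> d \<and> d < 0)"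
    and nob: "\<forall>g0>0. \<forall>\<xi>. \<exists>x\<le>\<xi>. \<psi> x < g0"
  shows "\<forall>\<xi>. 1 - \<delta>0 < U \<xi> \<longrightarrow> U \<xi> < 1 \<longrightarrow> \<psi> \<xi> \<le> K * (1 - U \<xi>) powr \<mu>"
proof (intro allI impI, rule ccontr)
  define \<Phi> where "\<Phi> = (\<lambda>t. \<psi> t - K * (1 - U t) powr \<mu>)"
  fix \<xi> assume x1: "1 - \<delta>0 < U \<xi>" and x2: "U \<xi> < 1" and "\<not> \<psi> \<xi> \<le> K * (1 - U \<xi>) powr \<mu>"
  then have P\<xi>: "\<Phi> \<xi> > 0" unfolding \<Phi>_def by simp
  have cont: "continuous_on S \<Phi>" for S unfolding \<Phi>_def using Phi_cont Ucont Ule \<psi>cont \<mu> by blast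
  have key: "\<Phi> x \<ge> \<Phi> \<xi>" if "x < \<xi>" "\<forall>t. x < t \<longrightarrow> t < \<xi> \<longrightarrow> U t < 1" for x
  proof (rule barrier_up[OF that(1) cont P\<xi>])
    fix t assume t: "x < t" "t < \<xi>" "\<Phi> t > 0"
    have "U \<xi> \<le> U t" using Uanti t(2) by (simp add: antimono_def)
    then show "\<exists>d. DERIV \<Phi> t :> d \<and> d < 0"
      using der t that(2) x1 unfolding \<Phi>_def by force
  qed
  define S where "S = {..\<xi>} \<inter> U -` {1}"
  have clS: "closed S" unfolding S_def
    by (rule continuous_closed_preimage[OF continuous_on_subset[OF Ucont]]) auto
  show False
  proof (cases "S = {}")
    case False
    have bdd: "bdd_above S" unfolding S_def by (auto intro: bdd_aboveI[of _ \<xi>])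
    define t1 where "t1 = Sup S"
    have t1S: "t1 \<in> S" unfolding t1_def using closed_contains_Sup[OF False bdd clS] .
    then have t1: "t1 \<le> \<xi>" "U t1 = 1" unfolding S_def by auto
    then have t1x: "t1 < \<xi>" using x2 by (cases "t1 = \<xi>") auto
    have "\<forall>t. t1 < t \<longrightarrow> t < \<xi> \<longrightarrow> U t < 1"
    proof (intro allI impI)
      fix t assume "t1 < t" "t < \<xi>"
      moreover have "U t \<noteq> 1"
      proof
        assume "U t = 1"
        then have "t \<in> S" using \<open>t < \<xi>\<close> unfolding S_def by auto
        then have "t \<le> t1" unfolding t1_def using bdd by (simp add: cSup_upper)
        then show False using \<open>t1 < t\<close> by simp
      qed
      ultimately show "U t < 1" using Ule by (meson order_le_less)
    qed
    from key[OF t1x this] have "\<Phi> t1 \<ge> \<Phi> \<xi>" .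
    moreover have "\<Phi> t1 = 0" unfolding \<Phi>_def using t1 \<psi>1 by simp
    ultimately show False using P\<xi> by simp
  next
    case True
    have nU: "U t < 1" if "t \<le> \<xi>" for t using True that Ule unfolding S_def
      by (metis IntI atMost_iff empty_iff order_le_less vimage_singleton_eq)
    have "\<psi> x \<ge> \<Phi> \<xi>" if "x \<le> \<xi>" for x
    proof -
      have "\<Phi> x \<ge> \<Phi> \<xi>"
      proof (cases "x = \<xi>")
        case False
        then show ?thesis using that nU by (intro key) auto
      qed simp
      moreover have "K * (1 - U x) powr \<mu> \<ge> 0" using K by simp
      ultimately show ?thesis unfolding \<Phi>_def by simp
    qed
    then show False using nob P\<xi> by (meson not_le)
  qed
qed

lemma abstract_down:
  fixes U \<psi> :: "real \<Rightarrow> real" and K \<mu> \<delta>0 :: real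
  assumes Ucont: "continuous_on UNIV U" and Uanti: "antimono U" and Ule: "\<forall>t. U t \<le> 1"
    and Ulim: "(U \<longlongrightarrow> 1) at_bot"
    and \<psi>cont: "continuous_on UNIV \<psi>" and \<psi>1: "\<forall>t. U t = 1 \<longrightarrow> \<psi> t = 0"
    and \<psi>pos: "\<forall>t. \<psi> t \<ge> 0"
    and \<mu>: "\<mu> > 0" and K: "K \<ge> 0"
    and der: "\<forall>t. 1 - \<delta>0 < U t \<longrightarrow> U t < 1 \<longrightarrow> \<psi> t - K * (1 - U t) powr \<mu> < 0 \<longrightarrow>
               (\<exists>d. DERIV (\<lambda>t. \<psi> t - K * (1 - U t) powr \<mu>) t :> d \<and> d > 0)"
  shows "\<forall>\<xi>. 1 - \<delta>0 < U \<xi> \<longrightarrow> U \<xi> < 1 \<longrightarrow> \<psi> \<xi> \<ge> K * (1 - U \<xi>) powr \<mu>"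
proof (intro allI impI, rule ccontr)
  define \<Phi> where "\<Phi> = (\<lambda>t. \<psi> t - K * (1 - U t) powr \<mu>)"
  fix \<xi> assume x1: "1 - \<delta>0 < U \<xi>" and x2: "U \<xi> < 1" and "\<not> \<psi> \<xi> \<ge> K * (1 - U \<xi>) powr \<mu>"
  then have P\<xi>: "\<Phi> \<xi> < 0" unfolding \<Phi>_def by simp
  have cont: "continuous_on S \<Phi>" for S unfolding \<Phi>_def using Phi_cont Ucont Ule \<psi>cont \<mu> by blast
  have key: "\<Phi> x \<le> \<Phi> \<xi>" if "x < \<xi>" "\<forall>t. x < t \<longrightarrow> t < \<xi> \<longrightarrow> U t < 1" for x
  proof (rule barrier_down[OF that(1) cont P\<xi>])
    fix t assume t: "x < t" "t < \<xi>" "\<Phi> t < 0"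
    have "U \<xi> \<le> U t" using Uanti t(2) by (simp add: antimono_def)
    then show "\<exists>d. DERIV \<Phi> t :> d \<and> d > 0"
      using der t that(2) x1 unfolding \<Phi>_def by force
  qed
  define S where "S = {..\<xi>} \<inter> U -` {1}"
  have clS: "closed S" unfolding S_def
    by (rule continuous_closed_preimage[OF continuous_on_subset[OF Ucont]]) auto
  show False
  proof (cases "S = {}")
    case False
    have bdd: "bdd_above S" unfolding S_def by (auto intro: bdd_aboveI[of _ \<xi>])
    define t1 where "t1 = Sup S"
    have t1S: "t1 \<in> S" unfolding t1_def using closed_contains_Sup[OF False bdd clS] .
    then have t1: "t1 \<le> \<xi>" "U t1 = 1" unfolding S_def by auto
    then have t1x: "t1 < \<xi>" using x2 by (cases "t1 = \<xi>") auto
    have "\<forall>t. t1 < t \<longrightarrow> t < \<xi> \<longrightarrow> U t < 1"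
    proof (intro allI impI)
      fix t assume "t1 < t" "t < \<xi>"
      moreover have "U t \<noteq> 1"
      proof
        assume "U t = 1"
        then have "t \<in> S" using \<open>t < \<xi>\<close> unfolding S_def by auto
        then have "t \<le> t1" unfolding t1_def using bdd by (simp add: cSup_upper)
        then show False using \<open>t1 < t\<close> by simp
      qed
      ultimately show "U t < 1" using Ule by (meson order_le_less)
    qed
    from key[OF t1x this] have "\<Phi> t1 \<le> \<Phi> \<xi>" .
    moreover have "\<Phi> t1 = 0" unfolding \<Phi>_def using t1 \<psi>1 by simp
    ultimately show False using P\<xi> by simp
  next
    case True
    have nU: "U t < 1" if "t \<le> \<xi>" for t using True that Ule unfolding S_def
      by (metis IntI atMost_iff empty_iff order_le_less vimage_singleton_eq)
    have bnd: "K * (1 - U x) powr \<mu> \<ge> - \<Phi> \<xi>" if "x \<le> \<xi>" for x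
    proof -
      have "\<Phi> x \<le> \<Phi> \<xi>"
      proof (cases "x = \<xi>")
        case False
        then show ?thesis using that nU by (intro key) auto
      qed simp
      then show ?thesis unfolding \<Phi>_def using \<psi>pos[rule_format, of x] by simp
    qed
    have lim: "((\<lambda>x. K * (1 - U x) powr \<mu>) \<longlongrightarrow> K * (1 - 1) powr \<mu>) at_bot"
      using Ule \<mu> by (intro tendsto_intros Ulim) auto
    then have "eventually (\<lambda>x. K * (1 - U x) powr \<mu> < - \<Phi> \<xi>) at_bot"
      using P\<xi> by (intro order_tendstoD) auto
    then obtain x0 where "\<forall>x\<le>x0. K * (1 - U x) powr \<mu> < - \<Phi> \<xi>"
      unfolding eventually_at_bot_linorder by blast
    then have "K * (1 - U (min x0 \<xi>)) powr \<mu> < - \<Phi> \<xi>" by simp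
    with bnd[of "min x0 \<xi>"] show False by simp
  qed
qed



lemma wave_basic:
  fixes U :: "real \<Rightarrow> real"
  assumes fw: "finite_wavefront m p \<gamma> h c U"
  shows "\<forall>t. 0 \<le> U t \<and> U t \<le> 1"
proof
  fix t
  have anti: "antimono U" and lim: "(U \<longlongrightarrow> 1) at_bot"
    and ex: "\<exists>\<xi>0. (\<forall>\<xi>\<ge>\<xi>0. U \<xi> = 0)" using fw unfolding finite_wavefront_def by auto
  obtain \<xi>0 where z: "\<forall>\<xi>\<ge>\<xi>0. U \<xi> = 0" using ex by blast
  have "U (max t \<xi>0) \<le> U t" using anti by (simp add: antimono_def)
  then have "0 \<le> U t" using z by simp
  moreover have "U t \<le> 1"
  proof (rule tendsto_le[OF _ lim tendsto_const])
    show "at_bot \<noteq> (bot :: real filter)" by simp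
    show "\<forall>\<^sub>F x in at_bot. U t \<le> U x"
      unfolding eventually_at_bot_linorder using anti by (auto simp: antimono_def intro!: exI[of _ t])
  qed
  ultimately show "0 \<le> U t \<and> U t \<le> 1" by simp
qed



lemma wave_facts:
  fixes U h :: "real \<Rightarrow> real" and m p \<gamma> c :: real
  assumes m: "m > 0" and p: "p > 1" and hc: "continuous_on {0..} h"
    and fw: "finite_wavefront m p \<gamma> h c U"
  defines "D \<equiv> deriv (\<lambda>t. U t powr m)"
  defines "\<psi> \<equiv> (\<lambda>t. \<bar>D t\<bar> powr (p - 1))"
  shows "continuous_on UNIV \<psi>"
    and "\<forall>t. U t = 1 \<longrightarrow> \<psi> t = 0"
    and "\<forall>t. D t \<le> 0 \<and> - D t = \<psi> t powr (1 / (p - 1))"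
    and "\<forall>t. 0 < U t \<longrightarrow> DERIV U t :> D t * U t powr (1 - m) / m"
    and "\<forall>t. 0 < U t \<longrightarrow> DERIV \<psi> t :> h (U t) + c * (D t * U t powr (1 - m) / m) - \<gamma> * \<psi> t"
    and "\<forall>g0>0. \<forall>\<xi>. \<exists>x\<le>\<xi>. \<psi> x < g0"
proof -
  define v where "v = (\<lambda>t. U t powr m)"
  have bnd: "\<forall>t. 0 \<le> U t \<and> U t \<le> 1" using wave_basic[OF fw] .
  have Ucont: "continuous_on UNIV U" and anti: "antimono U" and tw: "tw_solution m p \<gamma> h c U"
    using fw unfolding finite_wavefront_def by auto
  have dif: "\<And>t. v differentiable (at t)" and
    eq0: "\<And>a b. a \<le> b \<Longrightarrow> (\<lambda>s. pflux p (D s)) integrable_on {a..b} \<and>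
          pflux p (D b) - pflux p (D a) + \<gamma> * integral {a..b} (\<lambda>s. pflux p (D s))
          + integral {a..b} (\<lambda>s. h (U s)) + c * (U b - U a) = 0"
    using tw unfolding tw_solution_def D_def v_def Let_def by auto
  have dv: "DERIV v t :> D t" for t
    using dif[of t] unfolding D_def v_def[symmetric] by (simp add: DERIV_deriv_iff_real_differentiable)
  have Dle: "D t \<le> 0" for t
  proof (rule ccontr)
    assume "\<not> D t \<le> 0"
    then obtain d where d: "d > 0" "\<forall>h>0. h < d \<longrightarrow> v t < v (t + h)"
      using DERIV_pos_inc_right[OF dv[of t]] by auto
    then have "v t < v (t + d/2)" by simp
    moreover have "U (t + d/2) \<le> U t" using anti d(1) by (simp add: antimono_def)
    then have "v (t + d/2) \<le> v t" unfolding v_def using bnd m by (intro powr_mono2) auto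
    ultimately show False by simp
  qed
  have pf: "pflux p (D t) = - \<psi> t" for t
  proof (cases "D t = 0")
    case True then show ?thesis unfolding pflux_def \<psi>_def by simp
  next
    case False then have "D t < 0" using Dle[of t] by simp
    then show ?thesis unfolding pflux_def \<psi>_def by simp
  qed
  define w where "w = (\<lambda>s. - \<psi> s)"
  have eq: "\<And>a b. a \<le> b \<Longrightarrow> w integrable_on {a..b} \<and>
          w b - w a + \<gamma> * integral {a..b} w + integral {a..b} (\<lambda>s. h (U s)) + c * (U b - U a) = 0"
    using eq0 unfolding pf w_def by simp
  have hUc: "continuous_on UNIV (\<lambda>s. h (U s))"
    by (rule continuous_on_compose2[OF hc Ucont]) (use bnd in auto)
  have hUi: "(\<lambda>s. h (U s)) integrable_on {a..b}" for a b
    by (rule integrable_continuous_interval) (rule continuous_on_subset[OF hUc], auto)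
  define R where "R = (\<lambda>a x. w a - \<gamma> * integral {a..x} w - integral {a..x} (\<lambda>s. h (U s)) - c * (U x - U a))"
  have wR: "w x = R a x" if "a \<le> x" for a x
    using eq[OF that] unfolding R_def by algebra
  have wcont: "continuous_on UNIV w"
  proof (rule continuous_at_imp_continuous_on, intro ballI)
    fix t :: real
    have "continuous_on {t-1..t+1} (R (t-1))" unfolding R_def
      by (intro continuous_intros indefinite_integral_continuous_1 hUi continuous_on_subset[OF Ucont])
         (use eq in auto)
    then have "continuous_on {t-1..t+1} w" by (rule continuous_on_eq) (use wR in auto)
    then show "isCont w t" by (rule continuous_on_interior) auto
  qed
  show \<psi>cont: "continuous_on UNIV \<psi>"
  proof -
    have "continuous_on UNIV (\<lambda>s. - w s)" using wcont by (intro continuous_intros)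
    then show ?thesis unfolding w_def by simp
  qed
  show "\<forall>t. U t = 1 \<longrightarrow> \<psi> t = 0"
  proof (intro allI impI)
    fix t assume U1: "U t = 1"
    have "D t = 0"
    proof (rule DERIV_local_max[OF dv[of t], of 1], simp, intro allI impI)
      fix y :: real
      have "v y \<le> 1 powr m" unfolding v_def using bnd m by (intro powr_mono2) auto
      then show "v y \<le> v t" unfolding v_def using U1 by simp
    qed
    then show "\<psi> t = 0" unfolding \<psi>_def by simp
  qed
  show "\<forall>t. D t \<le> 0 \<and> - D t = \<psi> t powr (1 / (p - 1))"
  proof
    fix t
    have "\<psi> t powr (1 / (p - 1)) = \<bar>D t\<bar> powr ((p - 1) * (1 / (p - 1)))"
      unfolding \<psi>_def by (simp add: powr_powr)
    also have "\<dots> = \<bar>D t\<bar>" using p by simp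
    finally show "D t \<le> 0 \<and> - D t = \<psi> t powr (1 / (p - 1))" using Dle[of t] by simp
  qed
  have Ueq: "U = (\<lambda>x. v x powr (1/m))"
  proof
    fix x
    have "v x powr (1/m) = U x powr (m * (1/m))" unfolding v_def by (simp add: powr_powr)
    also have "\<dots> = U x" using m bnd by simp
    finally show "U x = v x powr (1/m)" by simp
  qed
  have dU: "DERIV U t :> D t * U t powr (1 - m) / m" if "0 < U t" for t
  proof -
    have vt: "v t > 0" unfolding v_def using that by simp
    have "DERIV (\<lambda>x. v x powr (1/m)) t :> (1/m) * v t powr (1/m - of_nat 1) * D t"
      by (rule DERIV_fun_powr[OF dv vt])
    moreover have "v t powr (1/m - of_nat 1) = U t powr (1 - m)"
    proof -
      have "v t powr (1/m - of_nat 1) = U t powr (m * (1/m - 1))" unfolding v_def by (simp add: powr_powr)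
      also have "m * (1/m - 1) = 1 - m" using m by (simp add: field_simps)
      finally show ?thesis .
    qed
    ultimately show ?thesis using Ueq[symmetric] by (simp add: mult.commute)
  qed
  show "\<forall>t. 0 < U t \<longrightarrow> DERIV U t :> D t * U t powr (1 - m) / m" using dU by blast
  show "\<forall>t. 0 < U t \<longrightarrow> DERIV \<psi> t :> h (U t) + c * (D t * U t powr (1 - m) / m) - \<gamma> * \<psi> t"
  proof (intro allI impI)
    fix t assume Ut: "0 < U t"
    define a b where "a = t - 1" and "b = t + 1"
    have ab: "a < t" "t < b" unfolding a_def b_def by auto
    have i1: "((\<lambda>x. integral {a..x} w) has_real_derivative w t) (at t within {a..b})"
      by (rule integral_has_real_derivative) (use ab in \<open>auto intro: continuous_on_subset[OF wcont]\<close>)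
    have i2: "((\<lambda>x. integral {a..x} (\<lambda>s. h (U s))) has_real_derivative h (U t)) (at t within {a..b})"
      by (rule integral_has_real_derivative) (use ab in \<open>auto intro: continuous_on_subset[OF hUc]\<close>)
    have i3: "(U has_real_derivative D t * U t powr (1 - m) / m) (at t within {a..b})"
      using dU[OF Ut] by (rule has_field_derivative_at_within)
    have "(R a has_real_derivative (- \<gamma> * w t - h (U t) - c * (D t * U t powr (1 - m) / m))) (at t within {a..b})"
      unfolding R_def
      by (rule derivative_eq_intros i1 i2 i3 | simp)+
    then have "(R a has_real_derivative (- \<gamma> * w t - h (U t) - c * (D t * U t powr (1 - m) / m))) (at t)"
      using at_within_Icc_at[OF ab] by simp
    then have "(w has_real_derivative (- \<gamma> * w t - h (U t) - c * (D t * U t powr (1 - m) / m))) (at t)"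
      by (rule has_field_derivative_transform_within_open[where S="{a<..<b}"]) (use ab in \<open>auto intro: wR[symmetric, OF less_imp_le]\<close>)
    then have "((\<lambda>s. - w s) has_real_derivative - (- \<gamma> * w t - h (U t) - c * (D t * U t powr (1 - m) / m))) (at t)"
      by (rule derivative_intros)
    then show "DERIV \<psi> t :> h (U t) + c * (D t * U t powr (1 - m) / m) - \<gamma> * \<psi> t"
      unfolding w_def by (simp add: algebra_simps)
  qed
  show "\<forall>g0>0. \<forall>\<xi>. \<exists>x\<le>\<xi>. \<psi> x < g0"
  proof (intro allI impI, rule ccontr)
    fix g0 \<xi> :: real assume g0: "g0 > 0" and "\<not> (\<exists>x\<le>\<xi>. \<psi> x < g0)"
    then have ge: "\<psi> x \<ge> g0" if "x \<le> \<xi>" for x using that by (meson not_le)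
    define e where "e = g0 powr (1 / (p - 1))"
    have e: "e > 0" unfolding e_def using g0 by simp
    have De: "D x \<le> - e" if "x \<le> \<xi>" for x
    proof -
      have "e \<le> \<psi> x powr (1 / (p - 1))" unfolding e_def using g0 p ge[OF that] by (intro powr_mono2) auto
      also have "\<psi> x powr (1 / (p - 1)) = - D x"
      proof -
        have "\<psi> x powr (1 / (p - 1)) = \<bar>D x\<bar> powr ((p - 1) * (1 / (p - 1)))"
          unfolding \<psi>_def by (simp add: powr_powr)
        also have "\<dots> = \<bar>D x\<bar>" using p by simp
        finally show ?thesis using Dle[of x] by simp
      qed
      finally show ?thesis by simp
    qed
    obtain z where z: "\<xi> - 2/e < z" "z < \<xi>" "v \<xi> - v (\<xi> - 2/e) = (\<xi> - (\<xi> - 2/e)) * D z"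
      using MVT2[of "\<xi> - 2/e" \<xi> v D] dv e by auto
    have "(\<xi> - (\<xi> - 2/e)) * D z \<le> (2/e) * (-e)"
      using De[of z] z(2) e by (simp add: divide_simps)
    also have "\<dots> = -2" using e by simp
    finally have "v \<xi> - v (\<xi> - 2/e) \<le> -2" using z(3) by simp
    moreover have "v \<xi> \<ge> 0" unfolding v_def by simp
    moreover have "v (\<xi> - 2/e) \<le> 1 powr m" unfolding v_def using bnd m by (intro powr_mono2) auto
    ultimately show False by simp
  qed
qed



lemma phi_deriv:
  fixes U \<psi> D h :: "real \<Rightarrow> real"
  assumes dU: "DERIV U t :> D t * U t powr (1 - m) / m"
    and d\<psi>: "DERIV \<psi> t :> h (U t) + c * (D t * U t powr (1 - m) / m) - \<gamma> * \<psi> t"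
    and Dq: "- D t = \<psi> t powr q"
    and U1: "U t < 1"
  shows "DERIV (\<lambda>t. \<psi> t - K * (1 - U t) powr \<mu>) t :>
     h (U t) - c * (\<psi> t powr q * U t powr (1 - m) / m) - \<gamma> * \<psi> t
       - K * \<mu> * (1 - U t) powr (\<mu> - 1) * (\<psi> t powr q * U t powr (1 - m) / m)"
proof -
  have g: "DERIV (\<lambda>t. 1 - U t) t :> - (D t * U t powr (1 - m) / m)"
    using dU by (intro derivative_eq_intros) auto
  have "DERIV (\<lambda>t. (1 - U t) powr \<mu>) t :> \<mu> * (1 - U t) powr (\<mu> - of_nat 1) * (- (D t * U t powr (1 - m) / m))"
    by (rule DERIV_fun_powr[OF g]) (use U1 in simp)
  then have "DERIV (\<lambda>t. K * (1 - U t) powr \<mu>) t :> K * (\<mu> * (1 - U t) powr (\<mu> - of_nat 1) * (- (D t * U t powr (1 - m) / m)))"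
    by (rule DERIV_cmult)
  then have "DERIV (\<lambda>t. \<psi> t - K * (1 - U t) powr \<mu>) t :>
     (h (U t) + c * (D t * U t powr (1 - m) / m) - \<gamma> * \<psi> t) -
     K * (\<mu> * (1 - U t) powr (\<mu> - of_nat 1) * (- (D t * U t powr (1 - m) / m)))"
    by (intro DERIV_diff d\<psi>)
  moreover have "D t = - (\<psi> t powr q)" using Dq by simp
  ultimately show ?thesis by (simp add: algebra_simps)
qed

lemma engine_up:
  fixes U \<psi> D h :: "real \<Rightarrow> real"
  assumes Ucont: "continuous_on UNIV U" and Uanti: "antimono U" and bnd: "\<forall>t. 0 \<le> U t \<and> U t \<le> 1"
    and \<psi>cont: "continuous_on UNIV \<psi>" and \<psi>nn: "\<forall>t. \<psi> t \<ge> 0" and \<psi>1: "\<forall>t. U t = 1 \<longrightarrow> \<psi> t = 0"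
    and Dq: "\<forall>t. D t \<le> 0 \<and> - D t = \<psi> t powr q"
    and dU: "\<forall>t. 0 < U t \<longrightarrow> DERIV U t :> D t * U t powr (1 - m) / m"
    and d\<psi>: "\<forall>t. 0 < U t \<longrightarrow> DERIV \<psi> t :> h (U t) + c * (D t * U t powr (1 - m) / m) - \<gamma> * \<psi> t"
    and nob: "\<forall>g0>0. \<forall>\<xi>. \<exists>x\<le>\<xi>. \<psi> x < g0"
    and \<mu>: "\<mu> > 0" and K: "K \<ge> 0"
    and ev: "eventually (\<lambda>u. \<forall>y. 0 \<le> y \<and> y > K * (1 - u) powr \<mu> \<longrightarrow>
        h u - c * (y powr q * u powr (1 - m) / m) - \<gamma> * y
       - K * \<mu> * (1 - u) powr (\<mu> - 1) * (y powr q * u powr (1 - m) / m) < 0) (at_left 1)"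
  shows "\<exists>\<delta>>0. \<forall>\<xi>. 1 - \<delta> < U \<xi> \<and> U \<xi> < 1 \<longrightarrow> \<psi> \<xi> \<le> K * (1 - U \<xi>) powr \<mu>"
proof -
  obtain b where b: "b < 1" "\<forall>y>b. y < 1 \<longrightarrow> (\<forall>z. 0 \<le> z \<and> z > K * (1 - y) powr \<mu> \<longrightarrow>
        h y - c * (z powr q * y powr (1 - m) / m) - \<gamma> * z
       - K * \<mu> * (1 - y) powr (\<mu> - 1) * (z powr q * y powr (1 - m) / m) < 0)"
    using ev unfolding eventually_at_left_field by blast
  define \<delta>0 where "\<delta>0 = 1 - max b 0"
  have \<psi>pos: "\<psi> t \<ge> 0" for t using \<psi>nn by simp
  have "\<forall>\<xi>. 1 - \<delta>0 < U \<xi> \<longrightarrow> U \<xi> < 1 \<longrightarrow> \<psi> \<xi> \<le> K * (1 - U \<xi>) powr \<mu>"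
  proof (rule abstract_up[OF Ucont Uanti _ \<psi>cont \<psi>1 \<mu> K _ nob])
    show "\<forall>t. U t \<le> 1" using bnd by simp
    show "\<forall>t. 1 - \<delta>0 < U t \<longrightarrow> U t < 1 \<longrightarrow> \<psi> t - K * (1 - U t) powr \<mu> > 0 \<longrightarrow>
               (\<exists>d. DERIV (\<lambda>t. \<psi> t - K * (1 - U t) powr \<mu>) t :> d \<and> d < 0)"
    proof (intro allI impI)
      fix t assume t: "1 - \<delta>0 < U t" "U t < 1" "\<psi> t - K * (1 - U t) powr \<mu> > 0"
      have Ut: "0 < U t" "b < U t" using t(1) unfolding \<delta>0_def by auto
      have dd: "DERIV (\<lambda>t. \<psi> t - K * (1 - U t) powr \<mu>) t :> h (U t) - c * (\<psi> t powr q * U t powr (1 - m) / m) - \<gamma> * \<psi> t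
       - K * \<mu> * (1 - U t) powr (\<mu> - 1) * (\<psi> t powr q * U t powr (1 - m) / m)"
        by (rule phi_deriv[where q=q]) (use dU d\<psi> Dq Ut t in auto)
      show "\<exists>d. DERIV (\<lambda>t. \<psi> t - K * (1 - U t) powr \<mu>) t :> d \<and> d < 0"
        using dd b(2) Ut(2) t(2,3) \<psi>pos by force
    qed
  qed
  moreover have "\<delta>0 > 0" unfolding \<delta>0_def using b by simp
  ultimately show ?thesis by blast
qed

lemma engine_down:
  fixes U \<psi> D h :: "real \<Rightarrow> real"
  assumes Ucont: "continuous_on UNIV U" and Uanti: "antimono U" and bnd: "\<forall>t. 0 \<le> U t \<and> U t \<le> 1"
    and Ulim: "(U \<longlongrightarrow> 1) at_bot"
    and \<psi>cont: "continuous_on UNIV \<psi>" and \<psi>nn: "\<forall>t. \<psi> t \<ge> 0" and \<psi>1: "\<forall>t. U t = 1 \<longrightarrow> \<psi> t = 0"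
    and Dq: "\<forall>t. D t \<le> 0 \<and> - D t = \<psi> t powr q"
    and dU: "\<forall>t. 0 < U t \<longrightarrow> DERIV U t :> D t * U t powr (1 - m) / m"
    and d\<psi>: "\<forall>t. 0 < U t \<longrightarrow> DERIV \<psi> t :> h (U t) + c * (D t * U t powr (1 - m) / m) - \<gamma> * \<psi> t"
    and \<mu>: "\<mu> > 0" and K: "K \<ge> 0"
    and ev: "eventually (\<lambda>u. \<forall>y. 0 \<le> y \<and> y < K * (1 - u) powr \<mu> \<longrightarrow>
        h u - c * (y powr q * u powr (1 - m) / m) - \<gamma> * y
       - K * \<mu> * (1 - u) powr (\<mu> - 1) * (y powr q * u powr (1 - m) / m) > 0) (at_left 1)"
  shows "\<exists>\<delta>>0. \<forall>\<xi>. 1 - \<delta> < U \<xi> \<and> U \<xi> < 1 \<longrightarrow> \<psi> \<xi> \<ge> K * (1 - U \<xi>) powr \<mu>"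
proof -
  obtain b where b: "b < 1" "\<forall>y>b. y < 1 \<longrightarrow> (\<forall>z. 0 \<le> z \<and> z < K * (1 - y) powr \<mu> \<longrightarrow>
        h y - c * (z powr q * y powr (1 - m) / m) - \<gamma> * z
       - K * \<mu> * (1 - y) powr (\<mu> - 1) * (z powr q * y powr (1 - m) / m) > 0)"
    using ev unfolding eventually_at_left_field by blast
  define \<delta>0 where "\<delta>0 = 1 - max b 0"
  have \<psi>pos: "\<forall>t. \<psi> t \<ge> 0" using \<psi>nn by simp
  have "\<forall>\<xi>. 1 - \<delta>0 < U \<xi> \<longrightarrow> U \<xi> < 1 \<longrightarrow> \<psi> \<xi> \<ge> K * (1 - U \<xi>) powr \<mu>"
  proof (rule abstract_down[OF Ucont Uanti _ Ulim \<psi>cont \<psi>1 \<psi>pos \<mu> K])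
    show "\<forall>t. U t \<le> 1" using bnd by simp
    show "\<forall>t. 1 - \<delta>0 < U t \<longrightarrow> U t < 1 \<longrightarrow> \<psi> t - K * (1 - U t) powr \<mu> < 0 \<longrightarrow>
               (\<exists>d. DERIV (\<lambda>t. \<psi> t - K * (1 - U t) powr \<mu>) t :> d \<and> d > 0)"
    proof (intro allI impI)
      fix t assume t: "1 - \<delta>0 < U t" "U t < 1" "\<psi> t - K * (1 - U t) powr \<mu> < 0"
      have Ut: "0 < U t" "b < U t" using t(1) unfolding \<delta>0_def by auto
      have dd: "DERIV (\<lambda>t. \<psi> t - K * (1 - U t) powr \<mu>) t :> h (U t) - c * (\<psi> t powr q * U t powr (1 - m) / m) - \<gamma> * \<psi> t
       - K * \<mu> * (1 - U t) powr (\<mu> - 1) * (\<psi> t powr q * U t powr (1 - m) / m)"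
        by (rule phi_deriv[where q=q]) (use dU d\<psi> Dq Ut t in auto)
      show "\<exists>d. DERIV (\<lambda>t. \<psi> t - K * (1 - U t) powr \<mu>) t :> d \<and> d > 0"
        using dd b(2) Ut(2) t(2,3) \<psi>pos by force
    qed
  qed
  moreover have "\<delta>0 > 0" unfolding \<delta>0_def using b by simp
  ultimately show ?thesis by blast
qed



lemma h_facts:
  fixes h :: "real \<Rightarrow> real" and a :: real
  assumes h_C1: "\<exists>h'. continuous_on {0..} h' \<and>
                 (\<forall>x\<ge>0. (h has_real_derivative h' x) (at x within {0..}))"
    and a_range: "0 \<le> a" "a < 1"
    and h_pos: "\<forall>u\<in>{a<..<1}. h u > 0"
    and h_neg_1: "\<forall>u>1. h u < 0"
  shows "continuous_on {0..} h" and "h 1 = 0" and "DERIV h 1 :> deriv h 1"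
    and "((\<lambda>u. h u / (1 - u)) \<longlongrightarrow> - deriv h 1) (at_left 1)"
proof -
  obtain h' where hd: "\<forall>x\<ge>0. (h has_real_derivative h' x) (at x within {0..})" using h_C1 by blast
  show hc: "continuous_on {0..} h"
    unfolding continuous_on_eq_continuous_within
    using hd by (auto intro: DERIV_continuous)
  have d1w: "(h has_real_derivative h' 1) (at 1 within {0<..})"
    by (rule has_field_derivative_subset[OF hd[rule_format, of 1]]) auto
  moreover have "at (1::real) within {0<..} = at 1" by (rule at_within_open) auto
  ultimately have d1: "DERIV h 1 :> h' 1" by simp
  then have dd: "deriv h 1 = h' 1" by (rule DERIV_imp_deriv)
  then show D1: "DERIV h 1 :> deriv h 1" using d1 by simp
  have c1: "isCont h 1" using d1 by (rule DERIV_isCont)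
  show h1: "h 1 = 0"
  proof (rule ccontr)
    assume ne: "h 1 \<noteq> 0"
    show False
    proof (cases "h 1 > 0")
      case True
      have "(h \<longlongrightarrow> h 1) (at_right 1)" using c1 by (simp add: isCont_def filterlim_at_split)
      then have "eventually (\<lambda>u. h u > 0) (at_right 1)" using True by (intro order_tendstoD) auto
      moreover have "eventually (\<lambda>u. u \<in> {1<..<2}) (at_right (1::real))" by (rule eventually_at_right_real) simp
      ultimately have "eventually (\<lambda>u::real. False) (at_right 1)"
        by eventually_elim (use h_neg_1 in force)
      then show False by simp
    next
      case False
      then have neg: "h 1 < 0" using ne by simp
      have "(h \<longlongrightarrow> h 1) (at_left 1)" using c1 by (simp add: isCont_def filterlim_at_split)
      then have "eventually (\<lambda>u. h u < 0) (at_left 1)" using neg by (intro order_tendstoD) auto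
      moreover have "eventually (\<lambda>u. u \<in> {a<..<1}) (at_left (1::real))" by (rule eventually_at_left_real) (use a_range in simp)
      ultimately have "eventually (\<lambda>u::real. False) (at_left 1)"
        by eventually_elim (use h_pos in force)
      then show False by simp
    qed
  qed
  have "((\<lambda>y. (h y - h 1) / (y - 1)) \<longlongrightarrow> deriv h 1) (at 1)"
    using D1 by (simp add: DERIV_def has_field_derivative_iff)
  then have "((\<lambda>y. - ((h y - h 1) / (y - 1))) \<longlongrightarrow> - deriv h 1) (at_left 1)"
    by (intro tendsto_minus) (simp add: filterlim_at_split)
  moreover have "(\<lambda>y. - ((h y - h 1) / (y - 1))) = (\<lambda>u. h u / (1 - u))"
  proof
    fix y :: real
    have "y - 1 = - (1 - y)" by simp
    then show "- ((h y - h 1) / (y - 1)) = h y / (1 - y)" using h1 by (simp add: minus_divide_right)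
  qed
  ultimately show "((\<lambda>u. h u / (1 - u)) \<longlongrightarrow> - deriv h 1) (at_left 1)" by simp
qed

lemma lim_Z: "((\<lambda>u. u powr r) \<longlongrightarrow> 1) (at_left (1::real))"
proof -
  have "((\<lambda>u. u powr r) \<longlongrightarrow> 1 powr r) (at_left (1::real))"
    by (intro tendsto_intros) auto
  then show ?thesis by simp
qed

lemma lim_s: assumes "k > 0" shows "((\<lambda>u. (1 - u) powr k) \<longlongrightarrow> 0) (at_left (1::real))"
proof -
  have ev: "eventually (\<lambda>u. u \<in> {0<..<1}) (at_left (1::real))" by (rule eventually_at_left_real) simp
  have l: "((\<lambda>u. 1 - u) \<longlongrightarrow> 1 - 1) (at_left (1::real))"
    by (intro tendsto_intros)
  have "((\<lambda>u. (1 - u) powr k) \<longlongrightarrow> (1 - 1) powr k) (at_left (1::real))"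
    by (rule tendsto_powr'[OF l tendsto_const]) (use assms in \<open>auto intro!: eventually_mono[OF ev]\<close>)
  then show ?thesis by simp
qed

lemma ev01: "eventually (\<lambda>u. 0 < u \<and> u < 1) (at_left (1::real))"
  using eventually_at_left_real[of 0 1] by (simp)



lemma ev_p2_up:
  fixes h :: "real \<Rightarrow> real" and m c \<gamma> p K A :: real
  assumes m: "m > 0" and c: "c > 0" and \<gamma>: "\<gamma> \<ge> 0" and p: "p > 2"
    and hlim: "((\<lambda>u. h u / (1 - u)) \<longlongrightarrow> A) (at_left 1)" and A: "A > 0"
    and K: "K > (m * A / c) powr (p - 1)"
  shows "eventually (\<lambda>u. \<forall>y. 0 \<le> y \<and> y > K * (1 - u) powr (p - 1) \<longrightarrow>
        h u - c * (y powr (1 / (p - 1)) * u powr (1 - m) / m) - \<gamma> * y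
       - K * (p - 1) * (1 - u) powr ((p - 1) - 1) * (y powr (1 / (p - 1)) * u powr (1 - m) / m) < 0) (at_left 1)"
proof -
  define q where "q = 1 / (p - 1)"
  define R where "R = K powr q"
  have q: "q > 0" unfolding q_def using p by simp
  have K0: "K > 0" using K by (rule le_less_trans[rotated]) simp
  have "R > ((m * A / c) powr (p - 1)) powr q" unfolding R_def
    by (rule powr_less_mono2[OF q _ K]) simp
  also have "((m * A / c) powr (p - 1)) powr q = m * A / c"
    unfolding q_def using p m A c by (simp add: powr_powr)
  finally have R: "R > m * A / c" .
  have "((\<lambda>u. h u / (1 - u) - c * R * u powr (1 - m) / m) \<longlongrightarrow> A - c * R * 1 / m) (at_left 1)"
    by (intro tendsto_intros hlim lim_Z) (use m in simp)
  moreover have "A - c * R * 1 / m < 0" using R m c by (simp add: field_simps)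
  ultimately have "eventually (\<lambda>u. h u / (1 - u) - c * R * u powr (1 - m) / m < 0) (at_left 1)"
    by (intro order_tendstoD) auto
  with ev01 show ?thesis
  proof eventually_elim
    case (elim u)
    show ?case
    proof (intro allI impI)
      fix y assume y: "0 \<le> y \<and> y > K * (1 - u) powr (p - 1)"
      define s where "s = 1 - u"
      define Z where "Z = u powr (1 - m)"
      have s: "s > 0" unfolding s_def using elim by simp
      have Z: "Z > 0" unfolding Z_def using elim by simp
      have "y powr q > (K * s powr (p - 1)) powr q"
        by (rule powr_less_mono2[OF q]) (use y K0 in \<open>auto simp: s_def\<close>)
      also have "(K * s powr (p - 1)) powr q = R * s"
        unfolding R_def q_def using K0 s p by (simp add: powr_mult powr_powr)
      finally have yq: "y powr q > R * s" .
      have hu: "h u < c * R * Z / m * s"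
        using elim s unfolding s_def[symmetric] Z_def[symmetric] by (simp add: field_simps)
      have t1: "c * (y powr q * Z / m) > c * (R * s * Z / m)"
        using yq c Z m by (simp add: field_simps)
      have t2: "\<gamma> * y \<ge> 0" using \<gamma> y by simp
      have t3: "K * (p - 1) * s powr ((p - 1) - 1) * (y powr q * Z / m) \<ge> 0"
        using K0 p Z m by simp
      have "c * R * Z / m * s = c * (R * s * Z / m)" by (simp add: field_simps)
      then show "h u - c * (y powr (1 / (p - 1)) * u powr (1 - m) / m) - \<gamma> * y
       - K * (p - 1) * (1 - u) powr ((p - 1) - 1) * (y powr (1 / (p - 1)) * u powr (1 - m) / m) < 0"
        using hu t1 t2 t3 unfolding q_def s_def Z_def by linarith
    qed
  qed
qed



lemma ev_p2_down:
  fixes h :: "real \<Rightarrow> real" and m c \<gamma> p K A :: real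
  assumes m: "m > 0" and c: "c > 0" and \<gamma>: "\<gamma> \<ge> 0" and p: "p > 2"
    and hlim: "((\<lambda>u. h u / (1 - u)) \<longlongrightarrow> A) (at_left 1)" and A: "A > 0"
    and K0: "K > 0" and K: "K < (m * A / c) powr (p - 1)"
  shows "eventually (\<lambda>u. \<forall>y. 0 \<le> y \<and> y < K * (1 - u) powr (p - 1) \<longrightarrow>
        h u - c * (y powr (1 / (p - 1)) * u powr (1 - m) / m) - \<gamma> * y
       - K * (p - 1) * (1 - u) powr ((p - 1) - 1) * (y powr (1 / (p - 1)) * u powr (1 - m) / m) > 0) (at_left 1)"
proof -
  define q where "q = 1 / (p - 1)"
  define R where "R = K powr q"
  have q: "q > 0" unfolding q_def using p by simp
  have R0: "R > 0" unfolding R_def using K0 by simp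
  have "R < ((m * A / c) powr (p - 1)) powr q" unfolding R_def
    by (rule powr_less_mono2[OF q _ K]) (use K0 in simp)
  also have "((m * A / c) powr (p - 1)) powr q = m * A / c"
    unfolding q_def using p m A c by (simp add: powr_powr)
  finally have R: "R < m * A / c" .
  have p2: "p - 2 > 0" using p by simp
  have "((\<lambda>u. h u / (1 - u) - c * R * u powr (1 - m) / m - \<gamma> * K * (1 - u) powr (p - 2)
            - K * (p - 1) * (1 - u) powr (p - 2) * R * u powr (1 - m) / m)
        \<longlongrightarrow> A - c * R * 1 / m - \<gamma> * K * 0 - K * (p - 1) * 0 * R * 1 / m) (at_left 1)"
    by (intro tendsto_intros hlim lim_Z lim_s p2) (use m in auto)
  moreover have "A - c * R * 1 / m - \<gamma> * K * 0 - K * (p - 1) * 0 * R * 1 / m > 0"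
    using R m c by (simp add: field_simps)
  ultimately have "eventually (\<lambda>u. h u / (1 - u) - c * R * u powr (1 - m) / m - \<gamma> * K * (1 - u) powr (p - 2)
            - K * (p - 1) * (1 - u) powr (p - 2) * R * u powr (1 - m) / m > 0) (at_left 1)"
    by (intro order_tendstoD) auto
  with ev01 show ?thesis
  proof eventually_elim
    case (elim u)
    show ?case
    proof (intro allI impI)
      fix y assume y: "0 \<le> y \<and> y < K * (1 - u) powr (p - 1)"
      define s where "s = 1 - u"
      define Z where "Z = u powr (1 - m)"
      define S where "S = s powr (p - 2)"
      have s: "s > 0" unfolding s_def using elim by simp
      have Z: "Z > 0" unfolding Z_def using elim by simp
      have S: "S \<ge> 0" unfolding S_def by simp
      have sp: "s powr (p - 1) = s * S"
      proof -
        have "s powr (1 + (p - 2)) = s powr 1 * s powr (p - 2)" by (rule powr_add)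
        moreover have "1 + (p - 2) = p - 1" by simp
        ultimately show ?thesis unfolding S_def using s by simp
      qed
      have "y powr q \<le> (K * s powr (p - 1)) powr q"
        by (rule powr_mono2) (use y K0 q in \<open>auto simp: s_def\<close>)
      also have "(K * s powr (p - 1)) powr q = R * s"
        unfolding R_def q_def using K0 s p by (simp add: powr_mult powr_powr)
      finally have yq: "y powr q \<le> R * s" .
      have L: "h u / s - c * R * Z / m - \<gamma> * K * S - K * (p - 1) * S * R * Z / m > 0"
        using elim unfolding s_def[symmetric] Z_def[symmetric] S_def[symmetric] by simp
      have hu: "h u > s * (c * R * Z / m + \<gamma> * K * S + K * (p - 1) * S * R * Z / m)"
      proof -
        have "h u / s > c * R * Z / m + \<gamma> * K * S + K * (p - 1) * S * R * Z / m" using L by simp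
        then show ?thesis using s by (simp add: field_simps)
      qed
      have t1: "c * (y powr q * Z / m) \<le> c * (R * s * Z / m)"
        using yq c Z m by (intro mult_left_mono divide_right_mono mult_right_mono) auto
      have t2: "\<gamma> * y \<le> \<gamma> * (K * (s * S))" using \<gamma> y sp unfolding s_def by (intro mult_left_mono) auto
      have t3: "K * (p - 1) * S * (y powr q * Z / m) \<le> K * (p - 1) * S * (R * s * Z / m)"
        using yq K0 p Z m S by (intro mult_left_mono divide_right_mono mult_right_mono) auto
      have eqS: "(1 - u) powr ((p - 1) - 1) = S" unfolding S_def s_def by (simp add: algebra_simps)
      have "s * (c * R * Z / m + \<gamma> * K * S + K * (p - 1) * S * R * Z / m)
            = c * (R * s * Z / m) + \<gamma> * (K * (s * S)) + K * (p - 1) * S * (R * s * Z / m)"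
        by (simp add: field_simps)
      then show "h u - c * (y powr (1 / (p - 1)) * u powr (1 - m) / m) - \<gamma> * y
       - K * (p - 1) * (1 - u) powr ((p - 1) - 1) * (y powr (1 / (p - 1)) * u powr (1 - m) / m) > 0"
        using hu t1 t2 t3 unfolding q_def Z_def eqS by linarith
    qed
  qed
qed



lemma quadC:
  fixes b M :: real
  assumes b: "b > 0" and M: "M > 0"
  defines "C \<equiv> (- b + sqrt (b\<^sup>2 + 4 * M)) / 2"
  shows "C > 0" and "C\<^sup>2 + b * C = M"
    and "\<And>K. K > C \<Longrightarrow> K\<^sup>2 + b * K > M"
    and "\<And>K. 0 < K \<Longrightarrow> K < C \<Longrightarrow> K\<^sup>2 + b * K < M"
proof -
  have "sqrt (b\<^sup>2) < sqrt (b\<^sup>2 + 4 * M)" using M by (intro real_sqrt_less_mono) simp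
  then have sq: "b < sqrt (b\<^sup>2 + 4 * M)" using b by simp
  then show C0: "C > 0" unfolding C_def by simp
  have s2: "(sqrt (b\<^sup>2 + 4 * M))\<^sup>2 = b\<^sup>2 + 4 * M" using M by (simp add: power2_eq_square)
  show eq: "C\<^sup>2 + b * C = M" unfolding C_def using s2 by (simp add: power2_eq_square field_simps)
  show "K\<^sup>2 + b * K > M" if "K > C" for K
  proof -
    have "K\<^sup>2 + b * K - (C\<^sup>2 + b * C) = (K - C) * (K + C + b)" by (simp add: power2_eq_square algebra_simps)
    moreover have "(K - C) * (K + C + b) > 0" using that C0 b by simp
    ultimately show ?thesis using eq by simp
  qed
  show "K\<^sup>2 + b * K < M" if "0 < K" "K < C" for K
  proof -
    have "K\<^sup>2 + b * K - (C\<^sup>2 + b * C) = (K - C) * (K + C + b)" by (simp add: power2_eq_square algebra_simps)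
    moreover have "(K - C) * (K + C + b) < 0" using that C0 b by (simp add: mult_neg_pos)
    ultimately show ?thesis using eq by simp
  qed
qed

lemma ev_2_up:
  fixes h :: "real \<Rightarrow> real" and m c \<gamma> q K A :: real
  assumes m: "m > 0" and c: "c > 0" and \<gamma>: "\<gamma> \<ge> 0" and q: "q = 1"
    and hlim: "((\<lambda>u. h u / (1 - u)) \<longlongrightarrow> A) (at_left 1)"
    and K0: "K > 0" and K: "K\<^sup>2 + (c + \<gamma> * m) * K > m * A"
  shows "eventually (\<lambda>u. \<forall>y. 0 \<le> y \<and> y > K * (1 - u) powr 1 \<longrightarrow>
        h u - c * (y powr q * u powr (1 - m) / m) - \<gamma> * y
       - K * 1 * (1 - u) powr (1 - 1) * (y powr q * u powr (1 - m) / m) < 0) (at_left 1)"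
proof -
  have "((\<lambda>u. h u / (1 - u) - K * ((c + K) * u powr (1 - m) / m + \<gamma>)) \<longlongrightarrow> A - K * ((c + K) * 1 / m + \<gamma>)) (at_left 1)"
    by (intro tendsto_intros hlim lim_Z) (use m in auto)
  moreover have "A - K * ((c + K) * 1 / m + \<gamma>) < 0"
  proof -
    have "m * A < K * (c + K) + K * \<gamma> * m" using K by (simp add: power2_eq_square algebra_simps)
    then have "A < (K * (c + K) + K * \<gamma> * m) / m" using m by (simp add: field_simps)
    also have "(K * (c + K) + K * \<gamma> * m) / m = K * ((c + K) * 1 / m + \<gamma>)" using m by (simp add: field_simps)
    finally show ?thesis by simp
  qed
  ultimately have "eventually (\<lambda>u. h u / (1 - u) - K * ((c + K) * u powr (1 - m) / m + \<gamma>) < 0) (at_left 1)"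
    by (intro order_tendstoD) auto
  with ev01 show ?thesis
  proof eventually_elim
    case (elim u)
    show ?case
    proof (intro allI impI)
      fix y assume y: "0 \<le> y \<and> y > K * (1 - u) powr 1"
      define s where "s = 1 - u"
      define Z where "Z = u powr (1 - m)"
      have s: "s > 0" unfolding s_def using elim by simp
      have Z: "Z > 0" unfolding Z_def using elim by simp
      have ys: "y > K * s" using y s unfolding s_def by simp
      have hu: "h u < s * (K * ((c + K) * Z / m + \<gamma>))"
      proof -
        have "h u / s < K * ((c + K) * Z / m + \<gamma>)" using elim unfolding s_def[symmetric] Z_def[symmetric] by simp
        then show ?thesis using s by (simp add: field_simps)
      qed
      have pos: "(c + K) * Z / m + \<gamma> > 0" using c K0 Z m \<gamma> by (simp add: add_pos_nonneg)
      have t: "y * ((c + K) * Z / m + \<gamma>) > K * s * ((c + K) * Z / m + \<gamma>)"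
        using ys pos by (simp add: mult_strict_right_mono)
      have e1: "(1 - u) powr (1 - 1) = 1" using s unfolding s_def by simp
      have e2: "y powr q = y" using q y by simp
      have "h u - c * (y powr q * u powr (1 - m) / m) - \<gamma> * y
       - K * 1 * (1 - u) powr (1 - 1) * (y powr q * u powr (1 - m) / m) = h u - y * ((c + K) * Z / m + \<gamma>)"
        unfolding e1 e2 Z_def[symmetric] by (simp add: field_simps add_divide_distrib)
      also have "\<dots> < 0" using hu t by (simp add: algebra_simps)
      finally show "h u - c * (y powr q * u powr (1 - m) / m) - \<gamma> * y
       - K * 1 * (1 - u) powr (1 - 1) * (y powr q * u powr (1 - m) / m) < 0" .
    qed
  qed
qed

lemma ev_2_down:
  fixes h :: "real \<Rightarrow> real" and m c \<gamma> q K A :: real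
  assumes m: "m > 0" and c: "c > 0" and \<gamma>: "\<gamma> \<ge> 0" and q: "q = 1"
    and hlim: "((\<lambda>u. h u / (1 - u)) \<longlongrightarrow> A) (at_left 1)"
    and K0: "K > 0" and K: "K\<^sup>2 + (c + \<gamma> * m) * K < m * A"
  shows "eventually (\<lambda>u. \<forall>y. 0 \<le> y \<and> y < K * (1 - u) powr 1 \<longrightarrow>
        h u - c * (y powr q * u powr (1 - m) / m) - \<gamma> * y
       - K * 1 * (1 - u) powr (1 - 1) * (y powr q * u powr (1 - m) / m) > 0) (at_left 1)"
proof -
  have "((\<lambda>u. h u / (1 - u) - K * ((c + K) * u powr (1 - m) / m + \<gamma>)) \<longlongrightarrow> A - K * ((c + K) * 1 / m + \<gamma>)) (at_left 1)"
    by (intro tendsto_intros hlim lim_Z) (use m in auto)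
  moreover have "A - K * ((c + K) * 1 / m + \<gamma>) > 0"
  proof -
    have "m * A > K * (c + K) + K * \<gamma> * m" using K by (simp add: power2_eq_square algebra_simps)
    then have "A > (K * (c + K) + K * \<gamma> * m) / m" using m by (simp add: field_simps)
    moreover have "(K * (c + K) + K * \<gamma> * m) / m = K * ((c + K) * 1 / m + \<gamma>)" using m by (simp add: field_simps)
    ultimately show ?thesis by simp
  qed
  ultimately have "eventually (\<lambda>u. h u / (1 - u) - K * ((c + K) * u powr (1 - m) / m + \<gamma>) > 0) (at_left 1)"
    by (intro order_tendstoD) auto
  with ev01 show ?thesis
  proof eventually_elim
    case (elim u)
    show ?case
    proof (intro allI impI)
      fix y assume y: "0 \<le> y \<and> y < K * (1 - u) powr 1"
      define s where "s = 1 - u"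
      define Z where "Z = u powr (1 - m)"
      have s: "s > 0" unfolding s_def using elim by simp
      have Z: "Z > 0" unfolding Z_def using elim by simp
      have ys: "y < K * s" using y s unfolding s_def by simp
      have hu: "h u > s * (K * ((c + K) * Z / m + \<gamma>))"
      proof -
        have "h u / s > K * ((c + K) * Z / m + \<gamma>)" using elim unfolding s_def[symmetric] Z_def[symmetric] by simp
        then show ?thesis using s by (simp add: field_simps)
      qed
      have pos: "(c + K) * Z / m + \<gamma> > 0" using c K0 Z m \<gamma> by (simp add: add_pos_nonneg)
      have t: "y * ((c + K) * Z / m + \<gamma>) < K * s * ((c + K) * Z / m + \<gamma>)"
        using ys pos by (simp add: mult_strict_right_mono)
      have e1: "(1 - u) powr (1 - 1) = 1" using s unfolding s_def by simp
      have e2: "y powr q = y" using q y by simp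
      have "h u - c * (y powr q * u powr (1 - m) / m) - \<gamma> * y
       - K * 1 * (1 - u) powr (1 - 1) * (y powr q * u powr (1 - m) / m) = h u - y * ((c + K) * Z / m + \<gamma>)"
        unfolding e1 e2 Z_def[symmetric] by (simp add: field_simps add_divide_distrib)
      also have "\<dots> > 0" using hu t by (simp add: algebra_simps)
      finally show "h u - c * (y powr q * u powr (1 - m) / m) - \<gamma> * y
       - K * 1 * (1 - u) powr (1 - 1) * (y powr q * u powr (1 - m) / m) > 0" .
    qed
  qed
qed



lemma ev_1_up:
  fixes h :: "real \<Rightarrow> real" and m c \<gamma> q K A :: real
  assumes m: "m > 0" and c: "c > 0" and \<gamma>: "\<gamma> > 0"
    and hlim: "((\<lambda>u. h u / (1 - u)) \<longlongrightarrow> A) (at_left 1)"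
    and K: "K > A / \<gamma>" and K0: "K > 0"
  shows "eventually (\<lambda>u. \<forall>y. 0 \<le> y \<and> y > K * (1 - u) powr 1 \<longrightarrow>
        h u - c * (y powr q * u powr (1 - m) / m) - \<gamma> * y
       - K * 1 * (1 - u) powr (1 - 1) * (y powr q * u powr (1 - m) / m) < 0) (at_left 1)"
proof -
  have "((\<lambda>u. h u / (1 - u) - \<gamma> * K) \<longlongrightarrow> A - \<gamma> * K) (at_left 1)"
    by (intro tendsto_intros hlim)
  moreover have "A - \<gamma> * K < 0" using K \<gamma> by (simp add: field_simps)
  ultimately have "eventually (\<lambda>u. h u / (1 - u) - \<gamma> * K < 0) (at_left 1)"
    by (intro order_tendstoD) auto
  with ev01 show ?thesis
  proof eventually_elim
    case (elim u)
    show ?case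
    proof (intro allI impI)
      fix y assume y: "0 \<le> y \<and> y > K * (1 - u) powr 1"
      define s where "s = 1 - u"
      define Z where "Z = u powr (1 - m)"
      have s: "s > 0" unfolding s_def using elim by simp
      have Z: "Z > 0" unfolding Z_def using elim by simp
      have ys: "y > K * s" using y s unfolding s_def by simp
      have hu: "h u < s * (\<gamma> * K)"
      proof -
        have "h u / s < \<gamma> * K" using elim unfolding s_def[symmetric] by simp
        then show ?thesis using s by (simp add: field_simps)
      qed
      have t: "\<gamma> * y > \<gamma> * (K * s)" using ys \<gamma> by simp
      have e1: "(1 - u) powr (1 - 1) = 1" using s unfolding s_def by simp
      have t1: "c * (y powr q * Z / m) \<ge> 0" using c Z m by simp
      have t2: "K * 1 * 1 * (y powr q * Z / m) \<ge> 0" using K0 Z m by simp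
      show "h u - c * (y powr q * u powr (1 - m) / m) - \<gamma> * y
       - K * 1 * (1 - u) powr (1 - 1) * (y powr q * u powr (1 - m) / m) < 0"
        unfolding e1 Z_def[symmetric] using hu t t1 t2 by (simp add: algebra_simps)
    qed
  qed
qed

lemma ev_1_down:
  fixes h :: "real \<Rightarrow> real" and m c \<gamma> q K A :: real
  assumes m: "m > 0" and c: "c > 0" and \<gamma>: "\<gamma> > 0" and q: "q > 1"
    and hlim: "((\<lambda>u. h u / (1 - u)) \<longlongrightarrow> A) (at_left 1)"
    and K: "K < A / \<gamma>" and K0: "K > 0"
  shows "eventually (\<lambda>u. \<forall>y. 0 \<le> y \<and> y < K * (1 - u) powr 1 \<longrightarrow>
        h u - c * (y powr q * u powr (1 - m) / m) - \<gamma> * y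
       - K * 1 * (1 - u) powr (1 - 1) * (y powr q * u powr (1 - m) / m) > 0) (at_left 1)"
proof -
  have q1: "q - 1 > 0" using q by simp
  have "((\<lambda>u. h u / (1 - u) - (c + K) * K powr q * (1 - u) powr (q - 1) * u powr (1 - m) / m - \<gamma> * K)
      \<longlongrightarrow> A - (c + K) * K powr q * 0 * 1 / m - \<gamma> * K) (at_left 1)"
    by (intro tendsto_intros hlim lim_Z lim_s q1) (use m in auto)
  moreover have "A - (c + K) * K powr q * 0 * 1 / m - \<gamma> * K > 0" using K \<gamma> by (simp add: field_simps)
  ultimately have "eventually (\<lambda>u. h u / (1 - u) - (c + K) * K powr q * (1 - u) powr (q - 1) * u powr (1 - m) / m - \<gamma> * K > 0) (at_left 1)"
    by (intro order_tendstoD) auto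
  with ev01 show ?thesis
  proof eventually_elim
    case (elim u)
    show ?case
    proof (intro allI impI)
      fix y assume y: "0 \<le> y \<and> y < K * (1 - u) powr 1"
      define s where "s = 1 - u"
      define Z where "Z = u powr (1 - m)"
      define S where "S = s powr (q - 1)"
      have s: "s > 0" unfolding s_def using elim by simp
      have Z: "Z > 0" unfolding Z_def using elim by simp
      have ys: "y < K * s" using y s unfolding s_def by simp
      have "y powr q \<le> (K * s) powr q" by (rule powr_mono2) (use q y ys in auto)
      also have "(K * s) powr q = K powr q * (s * S)"
      proof -
        have "s powr (1 + (q - 1)) = s powr 1 * s powr (q - 1)" by (rule powr_add)
        then have "s powr q = s * S" unfolding S_def using s by simp
        then show ?thesis using K0 s by (simp add: powr_mult)
      qed
      finally have yq: "y powr q \<le> K powr q * (s * S)" .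
      have hu: "h u > s * ((c + K) * K powr q * S * Z / m + \<gamma> * K)"
      proof -
        have "h u / s > (c + K) * K powr q * S * Z / m + \<gamma> * K"
          using elim unfolding s_def[symmetric] Z_def[symmetric] S_def[symmetric] by simp
        then show ?thesis using s by (simp add: field_simps)
      qed
      have t: "\<gamma> * y < \<gamma> * (K * s)" using ys \<gamma> by simp
      have e1: "(1 - u) powr (1 - 1) = 1" using s unfolding s_def by simp
      have t1: "(c + K) * (y powr q * Z / m) \<le> (c + K) * (K powr q * (s * S) * Z / m)"
        using yq c K0 Z m by (intro mult_left_mono divide_right_mono mult_right_mono) auto
      have "h u - c * (y powr q * Z / m) - \<gamma> * y - K * 1 * 1 * (y powr q * Z / m)
          = h u - (c + K) * (y powr q * Z / m) - \<gamma> * y" by (simp add: algebra_simps add_divide_distrib)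
      moreover have "s * ((c + K) * K powr q * S * Z / m + \<gamma> * K) = (c + K) * (K powr q * (s * S) * Z / m) + \<gamma> * (K * s)"
        by (simp add: field_simps)
      ultimately show "h u - c * (y powr q * u powr (1 - m) / m) - \<gamma> * y
       - K * 1 * (1 - u) powr (1 - 1) * (y powr q * u powr (1 - m) / m) > 0"
        unfolding e1 Z_def[symmetric] using hu t t1 by linarith
    qed
  qed
qed



lemma to_asymp:
  fixes U :: "real \<Rightarrow> real"
  assumes C: "C > 0"
    and up: "\<And>K. K > C \<Longrightarrow> \<exists>\<delta>>0. \<forall>\<xi>. 1 - \<delta> < U \<xi> \<and> U \<xi> < 1 \<longrightarrow> wave_flux m p U \<xi> \<le> K * (1 - U \<xi>) powr \<mu>"
    and down: "\<And>K. 0 < K \<Longrightarrow> K < C \<Longrightarrow> \<exists>\<delta>>0. \<forall>\<xi>. 1 - \<delta> < U \<xi> \<and> U \<xi> < 1 \<longrightarrow> wave_flux m p U \<xi> \<ge> K * (1 - U \<xi>) powr \<mu>"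
  shows "flux_asymp m p U C \<mu>"
  unfolding flux_asymp_def
proof (intro allI impI)
  fix \<epsilon> :: real assume \<epsilon>: "\<epsilon> > 0"
  define e where "e = min \<epsilon> 1 / 2"
  have e: "e > 0" "e < \<epsilon>" "e \<le> 1/2" unfolding e_def using \<epsilon> by auto
  obtain \<delta>1 where d1: "\<delta>1 > 0" "\<forall>\<xi>. 1 - \<delta>1 < U \<xi> \<and> U \<xi> < 1 \<longrightarrow> wave_flux m p U \<xi> \<le> (C * (1 + e)) * (1 - U \<xi>) powr \<mu>"
    using up[of "C * (1 + e)"] C e by auto
  obtain \<delta>2 where d2: "\<delta>2 > 0" "\<forall>\<xi>. 1 - \<delta>2 < U \<xi> \<and> U \<xi> < 1 \<longrightarrow> wave_flux m p U \<xi> \<ge> (C * (1 - e)) * (1 - U \<xi>) powr \<mu>"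
    using down[of "C * (1 - e)"] C e by auto
  show "\<exists>\<delta>>0. \<forall>\<xi>. 1 - \<delta> < U \<xi> \<and> U \<xi> < 1 \<longrightarrow>
          \<bar>wave_flux m p U \<xi> / (C * (1 - U \<xi>) powr \<mu>) - 1\<bar> < \<epsilon>"
  proof (intro exI[of _ "min \<delta>1 \<delta>2"] conjI allI impI)
    show "min \<delta>1 \<delta>2 > 0" using d1 d2 by simp
    fix \<xi> assume x: "1 - min \<delta>1 \<delta>2 < U \<xi> \<and> U \<xi> < 1"
    define S where "S = (1 - U \<xi>) powr \<mu>"
    have S: "S > 0" unfolding S_def using x by simp
    define W where "W = wave_flux m p U \<xi>"
    have w1: "W \<le> C * (1 + e) * S" using d1 x unfolding W_def S_def by auto
    have w2: "W \<ge> C * (1 - e) * S" using d2 x unfolding W_def S_def by auto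
    have CS: "C * S > 0" using C S by simp
    have "W / (C * S) \<le> 1 + e" using w1 CS by (simp add: divide_simps algebra_simps)
    moreover have "W / (C * S) \<ge> 1 - e" using w2 CS by (simp add: divide_simps algebra_simps)
    ultimately have "\<bar>W / (C * S) - 1\<bar> \<le> e" by simp
    then show "\<bar>wave_flux m p U \<xi> / (C * (1 - U \<xi>) powr \<mu>) - 1\<bar> < \<epsilon>"
      using e unfolding W_def S_def by simp
  qed
qed



theorem mainTheorem10:
  fixes m p a \<gamma>s \<gamma> :: real and h :: "real \<Rightarrow> real" and cg :: "real \<Rightarrow> real"
    and U :: "real \<Rightarrow> real"
  assumes m_pos: "m > 0" and p_gt1: "p > 1" and mp: "m * (p - 1) > 1"
    and h_C1: "\<exists>h'. continuous_on {0..} h' \<and>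
                 (\<forall>x\<ge>0. (h has_real_derivative h' x) (at x within {0..}))"
    and h0: "h 0 = 0"
    and a_range: "0 \<le> a" "a < 1"
    and h_neg_a: "\<forall>u\<in>{0..a}. h u \<le> 0"
    and h_pos: "\<forall>u\<in>{a<..<1}. h u > 0"
    and h_neg_1: "\<forall>u>1. h u < 0"
    and h'_1: "deriv h 1 < 0"
    and h_int: "a > 0 \<longrightarrow> integral {0..1} (\<lambda>u. h u * u powr (m - 1)) > 0"
    and \<gamma>s_pos: "\<gamma>s > 0"
    and cg_def: "\<forall>g\<in>{0..<\<gamma>s}. cg g > 0 \<and> (\<exists>V. finite_wavefront m p g h (cg g) V) \<and>
                   (\<forall>c V. c > 0 \<and> finite_wavefront m p g h c V \<longrightarrow> c = cg g)"
    and tw_unique: "\<forall>g\<in>{0..<\<gamma>s}. \<forall>V W. finite_wavefront m p g h (cg g) V \<and>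
                   finite_wavefront m p g h (cg g) W \<longrightarrow> (\<exists>\<tau>. \<forall>\<xi>. W \<xi> = V (\<xi> + \<tau>))"
    and \<gamma>_range: "0 \<le> \<gamma>" "\<gamma> < \<gamma>s"
    and U_wave: "finite_wavefront m p \<gamma> h (cg \<gamma>) U"
  shows "(p > 2 \<longrightarrow>
            flux_asymp m p U ((m * \<bar>deriv h 1\<bar> / cg \<gamma>) powr (p - 1)) (p - 1)) \<and>
         (p = 2 \<longrightarrow>
            flux_asymp m p U
              ((- (cg \<gamma> + \<gamma> * m) + sqrt ((cg \<gamma> + \<gamma> * m)\<^sup>2 + 4 * m * \<bar>deriv h 1\<bar>)) / 2) 1) \<and>
         (p < 2 \<and> \<gamma> > 0 \<longrightarrow> flux_asymp m p U (\<bar>deriv h 1\<bar> / \<gamma>) 1)"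

proof -
  define c where "c = cg \<gamma>"
  have c: "c > 0" unfolding c_def using cg_def \<gamma>_range by auto
  define A where "A = - deriv h 1"
  have A: "A > 0" unfolding A_def using h'_1 by simp
  have Aabs: "\<bar>deriv h 1\<bar> = A" unfolding A_def using h'_1 by simp
  have hc: "continuous_on {0..} h"
    and hlim0: "((\<lambda>u. h u / (1 - u)) \<longlongrightarrow> - deriv h 1) (at_left 1)"
    using h_facts[OF h_C1 a_range h_pos h_neg_1] by auto
  have hlim: "((\<lambda>u. h u / (1 - u)) \<longlongrightarrow> A) (at_left 1)" using hlim0 unfolding A_def .
  have fw: "finite_wavefront m p \<gamma> h c U" using U_wave unfolding c_def .
  have Ucont: "continuous_on UNIV U" and Uanti: "antimono U" and Ulim: "(U \<longlongrightarrow> 1) at_bot"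
    using fw unfolding finite_wavefront_def by auto
  have bnd: "\<forall>t. 0 \<le> U t \<and> U t \<le> 1" using wave_basic[OF fw] .
  define D where "D = deriv (\<lambda>t. U t powr m)"
  define \<psi> where "\<psi> = (\<lambda>t. \<bar>D t\<bar> powr (p - 1))"
  have psi_app: "\<And>t. \<bar>D t\<bar> powr (p - 1) = \<psi> t" unfolding \<psi>_def by simp
  note wf = wave_facts[OF m_pos p_gt1 hc fw, folded D_def, unfolded psi_app]
  have \<psi>nn: "\<forall>t. \<psi> t \<ge> 0" unfolding \<psi>_def by simp
  have wfl: "wave_flux m p U \<xi> = \<psi> \<xi>" for \<xi> unfolding wave_flux_def \<psi>_def D_def ..
  note engU = engine_up[OF Ucont Uanti bnd wf(1) \<psi>nn wf(2) wf(3) wf(4) wf(5) wf(6)]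
  note engD = engine_down[OF Ucont Uanti bnd Ulim wf(1) \<psi>nn wf(2) wf(3) wf(4) wf(5)]
  have \<gamma>0: "\<gamma> \<ge> 0" using \<gamma>_range by simp
  have case1: "flux_asymp m p U ((m * \<bar>deriv h 1\<bar> / cg \<gamma>) powr (p - 1)) (p - 1)" if p2: "p > 2"
  proof -
    have C: "(m * A / c) powr (p - 1) > 0" using m_pos A c by simp
    show ?thesis unfolding Aabs c_def[symmetric]
    proof (rule to_asymp[OF C])
      fix K assume K: "K > (m * A / c) powr (p - 1)"
      then have K0: "K \<ge> 0" using C by linarith
      show "\<exists>\<delta>>0. \<forall>\<xi>. 1 - \<delta> < U \<xi> \<and> U \<xi> < 1 \<longrightarrow> wave_flux m p U \<xi> \<le> K * (1 - U \<xi>) powr (p - 1)"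
        unfolding wfl using engU[OF _ K0 ev_p2_up[OF m_pos c \<gamma>0 p2 hlim A K]] p2 by simp
    next
      fix K assume K0: "0 < K" and K: "K < (m * A / c) powr (p - 1)"
      show "\<exists>\<delta>>0. \<forall>\<xi>. 1 - \<delta> < U \<xi> \<and> U \<xi> < 1 \<longrightarrow> wave_flux m p U \<xi> \<ge> K * (1 - U \<xi>) powr (p - 1)"
        unfolding wfl using engD[OF _ _ ev_p2_down[OF m_pos c \<gamma>0 p2 hlim A K0 K]] p2 K0 by simp
    qed
  qed
  have case2: "flux_asymp m p U
              ((- (cg \<gamma> + \<gamma> * m) + sqrt ((cg \<gamma> + \<gamma> * m)\<^sup>2 + 4 * m * \<bar>deriv h 1\<bar>)) / 2) 1" if p2: "p = 2"
  proof -
    define b where "b = c + \<gamma> * m"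
    have b: "b > 0" unfolding b_def using c \<gamma>0 m_pos by (simp add: add_pos_nonneg)
    have M: "m * A > 0" using m_pos A by simp
    note Q = quadC[OF b M]
    have Ceq: "(- (cg \<gamma> + \<gamma> * m) + sqrt ((cg \<gamma> + \<gamma> * m)\<^sup>2 + 4 * m * \<bar>deriv h 1\<bar>)) / 2
       = (- b + sqrt (b\<^sup>2 + 4 * (m * A))) / 2" unfolding b_def c_def Aabs by (simp add: mult.assoc)
    have q1: "1 / (p - 1) = 1" using p2 by simp
    show ?thesis unfolding Ceq
    proof (rule to_asymp[OF Q(1)])
      fix K assume K: "K > (- b + sqrt (b\<^sup>2 + 4 * (m * A))) / 2"
      then have K0: "K > 0" using Q(1) by simp
      have KK: "K\<^sup>2 + (c + \<gamma> * m) * K > m * A" using Q(3)[OF K] unfolding b_def .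
      show "\<exists>\<delta>>0. \<forall>\<xi>. 1 - \<delta> < U \<xi> \<and> U \<xi> < 1 \<longrightarrow> wave_flux m p U \<xi> \<le> K * (1 - U \<xi>) powr 1"
        unfolding wfl using engU[OF _ _ ev_2_up[OF m_pos c \<gamma>0 q1 hlim K0 KK]] K0 by simp
    next
      fix K assume K0: "0 < K" and K: "K < (- b + sqrt (b\<^sup>2 + 4 * (m * A))) / 2"
      have KK: "K\<^sup>2 + (c + \<gamma> * m) * K < m * A" using Q(4)[OF K0 K] unfolding b_def .
      show "\<exists>\<delta>>0. \<forall>\<xi>. 1 - \<delta> < U \<xi> \<and> U \<xi> < 1 \<longrightarrow> wave_flux m p U \<xi> \<ge> K * (1 - U \<xi>) powr 1"
        unfolding wfl using engD[OF _ _ ev_2_down[OF m_pos c \<gamma>0 q1 hlim K0 KK]] K0 by simp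
    qed
  qed
  have case3: "flux_asymp m p U (\<bar>deriv h 1\<bar> / \<gamma>) 1" if p2: "p < 2" and \<gamma>p: "\<gamma> > 0"
  proof -
    have C: "A / \<gamma> > 0" using A \<gamma>p by simp
    have q1: "1 / (p - 1) > 1" using p2 p_gt1 by (simp add: field_simps)
    show ?thesis unfolding Aabs
    proof (rule to_asymp[OF C])
      fix K assume K: "K > A / \<gamma>"
      then have K0: "K > 0" using C by simp
      show "\<exists>\<delta>>0. \<forall>\<xi>. 1 - \<delta> < U \<xi> \<and> U \<xi> < 1 \<longrightarrow> wave_flux m p U \<xi> \<le> K * (1 - U \<xi>) powr 1"
        unfolding wfl using engU[OF _ _ ev_1_up[OF m_pos c \<gamma>p hlim K K0]] K0 by simp
    next
      fix K assume K0: "0 < K" and K: "K < A / \<gamma>"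
      show "\<exists>\<delta>>0. \<forall>\<xi>. 1 - \<delta> < U \<xi> \<and> U \<xi> < 1 \<longrightarrow> wave_flux m p U \<xi> \<ge> K * (1 - U \<xi>) powr 1"
        unfolding wfl using engD[OF _ _ ev_1_down[OF m_pos c \<gamma>p q1 hlim K K0]] K0 by simp
    qed
  qed
  show ?thesis using case1 case2 case3 by blast
qed

end
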